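(* Let $\mathsf x=(\mathbf e_{\mathsf k_1}\ \cdots\ \mathbf e_{\mathsf k_s})\mathsf z\in\mathbb R^m$, where $\mathsf z\in\mathbb R^s$ is a random vector with $\mu_{\mathsf z}\ll\lambda^s$ and $\mathsf k=(\mathsf k_1,\dots,\mathsf k_s)^T\in\{1,\dots,m\}^s$ is a random index vector with $\mathsf k_1<\dots<\mathsf k_s$ (and $\mathbf e_i$ denotes the $i$-th unit vector of $\mathbb R^m$). If there exist $\mathbf A\in\mathbb R^{n\times m}$ and a Borel measurable $g\colon\mathbb R^{n\times m}\times\mathbb R^n\to\mathbb R^m$ such that $\mathbb P[g(\mathbf A,\mathbf A\mathsf x)\neq\mathsf x]<1$, then $n\ge s$.
   Context: $\mu_{\mathsf z}$ denotes the distribution of $\mathsf z$ and $\lambda^s$ Lebesgue measure on $\mathbb R^s$. *)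

theory Defs
  imports "HOL-Probability.Probability"
begin

text \<open>Vectors in R^d are represented as extensional functions on the index set {1..d}
  (points of PiM {1..d} (\<lambda>_. lborel)); n x m matrices as extensional functions on
  {1..n} \<times> {1..m}.\<close>

definition sparse_vec :: "nat \<Rightarrow> nat \<Rightarrow> (nat \<Rightarrow> nat) \<Rightarrow> (nat \<Rightarrow> real) \<Rightarrow> (nat \<Rightarrow> real)" where
  "sparse_vec m s kk zz = (\<lambda>i\<in>{1..m}. \<Sum>j=1..s. if kk j = i then zz j else 0)"

definition mat_vec :: "nat \<Rightarrow> nat \<Rightarrow> (nat \<times> nat \<Rightarrow> real) \<Rightarrow> (nat \<Rightarrow> real) \<Rightarrow> (nat \<Rightarrow> real)" where
  "mat_vec n m A v = (\<lambda>i\<in>{1..n}. \<Sum>j=1..m. A (i, j) * v j)"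

end

theory Submission
  imports Defs
begin

lemma kernel_exists:
  fixes a :: "nat \<Rightarrow> nat \<Rightarrow> real"
  assumes "finite J" "card J > n"
  shows "\<exists>v. (\<exists>j\<in>J. v j \<noteq> 0) \<and> (\<forall>j. j \<notin> J \<longrightarrow> v j = 0) \<and> (\<forall>i<n. (\<Sum>j\<in>J. a i j * v j) = 0)"
  using assms
proof (induction n arbitrary: J a)
  case 0
  then obtain j0 where "j0 \<in> J" by (metis card.empty ex_in_conv less_irrefl)
  then show ?case by (intro exI[of _ "\<lambda>j. if j \<in> J then 1 else 0"]) auto
next
  case (Suc n)
  show ?case
  proof (cases "\<forall>j\<in>J. a n j = 0")
    case True
    from Suc.IH[of J a] Suc.prems obtain v where v: "\<exists>j\<in>J. v j \<noteq> 0" "\<forall>j. j \<notin> J \<longrightarrow> v j = 0"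
      "\<forall>i<n. (\<Sum>j\<in>J. a i j * v j) = 0" by auto
    have "(\<Sum>j\<in>J. a n j * v j) = 0" using True by simp
    with v show ?thesis by (intro exI[of _ v]) (auto simp: less_Suc_eq)
  next
    case False
    then obtain j0 where j0: "j0 \<in> J" "a n j0 \<noteq> 0" by auto
    define J' where "J' = J - {j0}"
    define a' where "a' i j = a i j - (a i j0 / a n j0) * a n j" for i j
    have fin: "finite J'" and cJ': "card J' > n" using Suc.prems j0 by (auto simp: J'_def)
    from Suc.IH[OF fin cJ', of a'] obtain w where w: "\<exists>j\<in>J'. w j \<noteq> 0" "\<forall>j. j \<notin> J' \<longrightarrow> w j = 0"
      "\<forall>i<n. (\<Sum>j\<in>J'. a' i j * w j) = 0" by auto
    define t where "t = - (\<Sum>j\<in>J'. a n j * w j) / a n j0"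
    define v where "v j = (if j = j0 then t else w j)" for j
    have split: "(\<Sum>j\<in>J. a i j * v j) = (\<Sum>j\<in>J'. a i j * w j) + a i j0 * t" for i
    proof -
      have "(\<Sum>j\<in>J. a i j * v j) = a i j0 * v j0 + (\<Sum>j\<in>J'. a i j * v j)"
        using Suc.prems(1) j0(1) unfolding J'_def by (simp add: sum.remove)
      also have "(\<Sum>j\<in>J'. a i j * v j) = (\<Sum>j\<in>J'. a i j * w j)"
        by (rule sum.cong) (auto simp: v_def J'_def)
      finally show ?thesis by (simp add: v_def)
    qed
    have eqs: "(\<Sum>j\<in>J. a i j * v j) = 0" if "i < Suc n" for i
    proof (cases "i = n")
      case True
      then show ?thesis using split[of n] j0 by (simp add: t_def)
    next
      case False
      then have "i < n" using that by simp
      then have "(\<Sum>j\<in>J'. a' i j * w j) = 0" using w by auto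
      then have "(\<Sum>j\<in>J'. a i j * w j) - (a i j0 / a n j0) * (\<Sum>j\<in>J'. a n j * w j) = 0"
        by (simp add: a'_def algebra_simps sum_subtractf sum_distrib_left)
      then show ?thesis using split[of i] j0 by (simp add: t_def field_simps)
    qed
    show ?thesis
    proof (intro exI[of _ v] conjI allI impI)
      show "\<exists>j\<in>J. v j \<noteq> 0" using w(1) by (auto simp: v_def J'_def)
      show "v j = 0" if "j \<notin> J" for j using that w(2) j0 by (auto simp: v_def J'_def)
      show "(\<Sum>j\<in>J. a i j * v j) = 0" if "i < Suc n" for i using eqs that by blast
    qed
  qed
qed


lemma transl_meas:
  fixes c :: "'i \<Rightarrow> real"
  shows "(\<lambda>x. \<lambda>i\<in>I. x i + c i) \<in> measurable (PiM I (\<lambda>_. lborel)) (PiM I (\<lambda>_. lborel))"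
  by (intro measurable_restrict) (simp add: measurable_component_singleton)

lemma lborel_PiM_transl:
  fixes c :: "'i \<Rightarrow> real"
  assumes I: "finite I"
  shows "distr (PiM I (\<lambda>_. lborel)) (PiM I (\<lambda>_. lborel)) (\<lambda>x. \<lambda>i\<in>I. x i + c i) = PiM I (\<lambda>_. lborel)"
proof -
  interpret product_sigma_finite "\<lambda>_::'i. lborel::real measure"
    by (simp add: product_sigma_finite_def sigma_finite_lborel)
  show ?thesis
  proof (rule PiM_eqI[OF I])
    show "sets (distr (PiM I (\<lambda>_. lborel)) (PiM I (\<lambda>_. lborel)) (\<lambda>x. \<lambda>i\<in>I. x i + c i)) = sets (PiM I (\<lambda>_. lborel))"
      by simp
    fix A assume A: "\<And>i. i \<in> I \<Longrightarrow> A i \<in> sets (lborel::real measure)"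
    have "emeasure (distr (PiM I (\<lambda>_. lborel)) (PiM I (\<lambda>_. lborel)) (\<lambda>x. \<lambda>i\<in>I. x i + c i)) (Pi\<^sub>E I A)
       = emeasure (PiM I (\<lambda>_. lborel)) ((\<lambda>x. \<lambda>i\<in>I. x i + c i) -` Pi\<^sub>E I A \<inter> space (PiM I (\<lambda>_. lborel)))"
      by (rule emeasure_distr[OF transl_meas]) (use A I in \<open>auto intro!: sets_PiM_I_finite\<close>)
    also have "(\<lambda>x. \<lambda>i\<in>I. x i + c i) -` Pi\<^sub>E I A \<inter> space (PiM I (\<lambda>_. lborel)) = Pi\<^sub>E I (\<lambda>i. (\<lambda>x. c i + x) -` A i)"
      by (auto simp: space_PiM PiE_def Pi_def add.commute)
    also have "emeasure (PiM I (\<lambda>_. lborel)) (Pi\<^sub>E I (\<lambda>i. (\<lambda>x. c i + x) -` A i)) = (\<Prod>i\<in>I. emeasure lborel ((\<lambda>x. c i + x) -` A i))"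
    proof (rule emeasure_PiM[OF I])
      fix i assume "i \<in> I"
      have "(\<lambda>x. c i + x) \<in> measurable (lborel::real measure) lborel" by simp
      then show "(\<lambda>x. c i + x) -` A i \<in> sets lborel" using A[OF \<open>i\<in>I\<close>] measurable_sets[of "(\<lambda>x. c i + x)" lborel lborel "A i"] by simp
    qed
    also have "\<dots> = (\<Prod>i\<in>I. emeasure lborel (A i))"
    proof (rule prod.cong[OF refl])
      fix i assume "i \<in> I"
      have "emeasure lborel (A i) = emeasure (distr lborel borel ((+) (c i))) (A i)"
        by (simp add: lborel_distr_plus)
      also have "\<dots> = emeasure lborel ((\<lambda>x. c i + x) -` A i)"
        using A[OF \<open>i\<in>I\<close>] by (subst emeasure_distr) auto
      finally show "emeasure lborel ((\<lambda>x. c i + x) -` A i) = emeasure lborel (A i)" by simp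
    qed
    finally show "emeasure (distr (PiM I (\<lambda>_. lborel)) (PiM I (\<lambda>_. lborel)) (\<lambda>x. \<lambda>i\<in>I. x i + c i)) (Pi\<^sub>E I A) = (\<Prod>i\<in>I. emeasure lborel (A i))" .
  qed
qed

lemma bounded_idx:
  assumes "finite I"
  shows "\<exists>R::nat. \<forall>i\<in>I. \<bar>x i :: real\<bar> \<le> real R"
proof -
  have "\<forall>i\<in>I. \<bar>x i\<bar> \<le> (\<Sum>i\<in>I. \<bar>x i\<bar>)" using assms by (auto intro: member_le_sum)
  moreover have "(\<Sum>i\<in>I. \<bar>x i\<bar>) \<le> real (nat \<lceil>\<Sum>i\<in>I. \<bar>x i\<bar>\<rceil>)" by linarith
  ultimately show ?thesis by (meson order_trans)
qed

lemma null_if_line_injective: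
  fixes S :: "('i \<Rightarrow> real) set" and v :: "'i \<Rightarrow> real"
  assumes I: "finite I" and S: "S \<in> sets (PiM I (\<lambda>_. lborel))"
    and v: "\<exists>i\<in>I. v i \<noteq> 0"
    and inj: "\<And>x t. x \<in> S \<Longrightarrow> (\<lambda>i\<in>I. x i + t * v i) \<in> S \<Longrightarrow> t = 0"
  shows "emeasure (PiM I (\<lambda>_. lborel)) S = 0"
proof (rule ccontr)
  define L where "L = PiM I (\<lambda>_. lborel::real measure)"
  interpret product_sigma_finite "\<lambda>_::'i. lborel::real measure"
    by (simp add: product_sigma_finite_def sigma_finite_lborel)
  assume nz: "emeasure (PiM I (\<lambda>_. lborel)) S \<noteq> 0"
  define B where "B R = Pi\<^sub>E I (\<lambda>_. {- real R..real R})" for R :: nat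
  have Bs: "B R \<in> sets L" for R unfolding B_def L_def by (rule sets_PiM_I_finite[OF I]) auto
  have S_sub: "S \<subseteq> space L" using S sets.sets_into_space unfolding L_def by blast
  have "S = (\<Union>R. S \<inter> B R)"
  proof safe
    fix x assume "x \<in> S"
    then have xs: "x \<in> space L" using S_sub by blast
    obtain R where "\<forall>i\<in>I. \<bar>x i\<bar> \<le> real R" using bounded_idx[OF I] by blast
    then have "x \<in> B R" using xs by (auto simp: B_def L_def space_PiM PiE_def abs_le_iff)
    then show "x \<in> (\<Union>R. S \<inter> B R)" using \<open>x \<in> S\<close> by blast
  qed
  then have SU: "S = (\<Union>R. S \<inter> B R)" .
  have "\<exists>R. emeasure L (S \<inter> B R) \<noteq> 0"
  proof (rule ccontr)
    assume "\<nexists>R. emeasure L (S \<inter> B R) \<noteq> 0"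
    then have "emeasure L (\<Union>R. S \<inter> B R) = 0"
      by (intro emeasure_UN_eq_0) (use S Bs in \<open>auto simp: L_def\<close>)
    then show False using nz SU unfolding L_def by simp
  qed
  then obtain R where R: "emeasure L (S \<inter> B R) \<noteq> 0" by blast
  define S' where "S' = S \<inter> B R"
  have S's: "S' \<in> sets L" using S Bs unfolding S'_def L_def by auto
  have "emeasure L S' \<le> emeasure L (B R)" unfolding S'_def by (rule emeasure_mono) (auto simp: Bs)
  also have "emeasure L (B R) = (\<Prod>i\<in>I. emeasure lborel {- real R..real R})"
    unfolding L_def B_def by (rule emeasure_PiM[OF I]) auto
  also have "\<dots> < top" by (simp add: power_less_top_ennreal)
  finally have "emeasure L S' < top" .
  then obtain e where e: "emeasure L S' = ennreal e" "e \<ge> 0" using less_top_ennreal by auto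
  have epos: "e > 0" using R e unfolding S'_def by (cases "e = 0") auto
  define C where "C = real R + (\<Sum>i\<in>I. \<bar>v i\<bar>)"
  define \<tau> where "\<tau> j = (\<lambda>x. \<lambda>i\<in>I. x i + (- v i / real (Suc j)))" for j
  define T where "T j = \<tau> j -` S' \<inter> space L" for j
  have \<tau>m: "\<tau> j \<in> measurable L L" for j unfolding \<tau>_def L_def by (rule transl_meas)
  have Ts: "T j \<in> sets L" for j unfolding T_def using \<tau>m S's by (rule measurable_sets)
  have Tm: "emeasure L (T j) = ennreal e" for j
  proof -
    have "emeasure L (T j) = emeasure (distr L L (\<tau> j)) S'"
      unfolding T_def using \<tau>m S's by (simp add: emeasure_distr)
    also have "distr L L (\<tau> j) = L" unfolding L_def \<tau>_def by (rule lborel_PiM_transl[OF I])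
    finally show ?thesis using e by simp
  qed
  define B' where "B' = Pi\<^sub>E I (\<lambda>_. {- C..C})"
  have TB: "T j \<subseteq> B'" for j
  proof
    fix x assume "x \<in> T j"
    then have xs: "x \<in> space L" and tx: "\<tau> j x \<in> B R" unfolding T_def S'_def by auto
    have "\<bar>x i\<bar> \<le> C" if "i \<in> I" for i
    proof -
      have "\<tau> j x i \<in> {- real R..real R}" using tx that by (auto simp: B_def PiE_def Pi_def)
      then have "\<bar>x i + (- v i / real (Suc j))\<bar> \<le> real R" using that by (simp add: \<tau>_def abs_le_iff)
      moreover have "\<bar>v i / real (Suc j)\<bar> \<le> \<bar>v i\<bar>"
        by (simp add: abs_divide divide_le_eq_1 field_simps mult_le_cancel_left1)
      moreover have "\<bar>v i\<bar> \<le> (\<Sum>i\<in>I. \<bar>v i\<bar>)" using I that by (auto intro: member_le_sum)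
      ultimately show ?thesis unfolding C_def by linarith
    qed
    then show "x \<in> B'" using xs unfolding B'_def L_def space_PiM PiE_def Pi_def
      by (auto simp: abs_le_iff) (metis minus_le_iff)
  qed
  have disj: "disjoint_family T"
  unfolding disjoint_family_on_def
  proof (intro ballI impI)
    fix j l assume "j \<in> (UNIV::nat set)" "l \<in> (UNIV::nat set)" "j \<noteq> l"
    show "T j \<inter> T l = {}"
    proof (rule ccontr)
      assume "T j \<inter> T l \<noteq> {}"
      then obtain x where x: "\<tau> j x \<in> S" "\<tau> l x \<in> S" unfolding T_def S'_def by auto
      define t where "t = 1 / real (Suc j) - 1 / real (Suc l)"
      have "(\<lambda>i\<in>I. \<tau> j x i + t * v i) = \<tau> l x"
      proof (rule ext)
        fix i
        have "t * v i = v i / real (Suc j) - v i / real (Suc l)" by (simp add: t_def left_diff_distrib)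
        then show "(\<lambda>i\<in>I. \<tau> j x i + t * v i) i = \<tau> l x i" by (simp add: \<tau>_def)
      qed
      then have "t = 0" using inj[OF x(1)] x(2) by simp
      then show False using \<open>j \<noteq> l\<close> by (simp add: t_def)
    qed
  qed
  have "(\<Sum>j. emeasure L (T j)) = emeasure L (\<Union>j. T j)"
    by (rule suminf_emeasure) (use Ts disj in auto)
  also have "\<dots> \<le> emeasure L B'" by (rule emeasure_mono) (use TB in \<open>auto simp: B'_def L_def intro!: sets_PiM_I_finite[OF I]\<close>)
  also have "emeasure L B' = (\<Prod>i\<in>I. emeasure lborel {- C..C})"
    unfolding L_def B'_def by (rule emeasure_PiM[OF I]) auto
  also have "\<dots> < top" by (simp add: power_less_top_ennreal emeasure_lborel_Icc_eq)
  finally have "(\<Sum>j. ennreal e) < top" using Tm by simp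
  moreover have "(\<Sum>j. ennreal e) = top"
    by (rule summable_iff_suminf_neq_top) (use epos in \<open>auto simp: summable_const_iff\<close>)
  ultimately show False by simp
qed



lemma incr_lt:
  fixes K :: "nat \<Rightarrow> nat"
  assumes inc: "\<forall>j. 1 \<le> j \<and> j < s \<longrightarrow> K j < K (Suc j)" and "1 \<le> j"
  shows "j < j' \<Longrightarrow> j' \<le> s \<Longrightarrow> K j < K j'"
proof (induction j')
  case 0 then show ?case by simp
next
  case (Suc j')
  show ?case
  proof (cases "j = j'")
    case True then show ?thesis using inc Suc.prems assms(2) by auto
  next
    case False
    then have "j < j'" using Suc.prems by simp
    then have "K j < K j'" using Suc by simp
    also have "K j' < K (Suc j')" using inc Suc.prems \<open>j < j'\<close> assms(2) by auto
    finally show ?thesis .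
  qed
qed

lemma sv_eval:
  assumes inj: "inj_on K {1..s}" and rng: "\<forall>j\<in>{1..s}. K j \<in> {1..m}" and j: "j \<in> {1..s}"
  shows "sparse_vec m s K y (K j) = y j"
proof -
  have "(\<Sum>j'=1..s. if K j' = K j then y j' else 0) = (\<Sum>j'=1..s. if j' = j then y j' else 0)"
    by (rule sum.cong[OF refl]) (use inj j in \<open>auto dest: inj_onD\<close>)
  also have "\<dots> = y j" using j by simp
  finally show ?thesis using rng j by (simp add: sparse_vec_def)
qed

lemma sv_inj:
  assumes inj: "inj_on K {1..s}" and rng: "\<forall>j\<in>{1..s}. K j \<in> {1..m}"
    and y: "y \<in> extensional {1..s}" and y': "y' \<in> extensional {1..s}"
    and eq: "sparse_vec m s K y = sparse_vec m s K y'"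
  shows "y = y'"
proof (rule extensionalityI[OF y y'])
  fix j assume "j \<in> {1..s}"
  then show "y j = y' j" using sv_eval[OF inj rng, of j y] sv_eval[OF inj rng, of j y'] eq by simp
qed

lemma mv_sv:
  assumes rng: "\<forall>j\<in>{1..s}. K j \<in> {1..m}"
  shows "mat_vec n m A (sparse_vec m s K y) = (\<lambda>i\<in>{1..n}. \<Sum>j=1..s. A (i, K j) * y j)"
proof (rule ext)
  fix i
  have "(\<Sum>l=1..m. A (i, l) * sparse_vec m s K y l) = (\<Sum>l=1..m. \<Sum>j=1..s. if K j = l then A (i, l) * y j else 0)"
    by (rule sum.cong[OF refl]) (auto simp: sparse_vec_def sum_distrib_left if_distrib intro!: sum.cong)
  also have "\<dots> = (\<Sum>j=1..s. \<Sum>l=1..m. if K j = l then A (i, l) * y j else 0)"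
    by (rule sum.swap)
  also have "\<dots> = (\<Sum>j=1..s. A (i, K j) * y j)"
    by (rule sum.cong[OF refl]) (use rng in \<open>simp add: sum.delta\<close>)
  finally show "mat_vec n m A (sparse_vec m s K y) i = (\<lambda>i\<in>{1..n}. \<Sum>j=1..s. A (i, K j) * y j) i"
    by (simp add: mat_vec_def)
qed

lemma sv_meas:
  assumes kk: "\<forall>j\<in>{1..s}. (\<lambda>\<omega>. kk \<omega> j) \<in> measurable N (count_space UNIV)"
    and zz: "\<forall>j\<in>{1..s}. (\<lambda>\<omega>. zz \<omega> j) \<in> borel_measurable N"
  shows "(\<lambda>\<omega>. sparse_vec m s (kk \<omega>) (zz \<omega>)) \<in> measurable N (PiM {1..m} (\<lambda>_. borel))"
  unfolding sparse_vec_def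
proof (rule measurable_restrict)
  fix i assume "i \<in> {1..m}"
  show "(\<lambda>\<omega>. \<Sum>j=1..s. if kk \<omega> j = i then zz \<omega> j else 0) \<in> borel_measurable N"
  proof (rule borel_measurable_sum)
    fix j assume j: "j \<in> {1..s}"
    have "(\<lambda>\<omega>. kk \<omega> j) -` {i} \<inter> space N \<in> sets N"
      using kk j by (intro measurable_sets) auto
    moreover have "(\<lambda>\<omega>. kk \<omega> j) -` {i} \<inter> space N = {\<omega>\<in>space N. kk \<omega> j = i}" by auto
    ultimately show "(\<lambda>\<omega>. if kk \<omega> j = i then zz \<omega> j else 0) \<in> borel_measurable N"
      using zz j by (intro measurable_If) auto
  qed
qed

lemma bad_meas:
  assumes g: "g \<in> measurable (PiM ({1..n} \<times> {1..m}) (\<lambda>_. borel) \<Otimes>\<^sub>M PiM {1..n} (\<lambda>_. borel)) (PiM {1..m} (\<lambda>_. borel))"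
    and A: "A \<in> ({1..n} \<times> {1..m}) \<rightarrow>\<^sub>E UNIV"
    and f: "f \<in> measurable N (PiM {1..m} (\<lambda>_. borel :: real measure))"
  shows "{\<omega>\<in>space N. g (A, mat_vec n m A (f \<omega>)) \<noteq> f \<omega>} \<in> sets N"
proof -
  have fm: "(\<lambda>\<omega>. f \<omega> l) \<in> borel_measurable N" if "l \<in> {1..m}" for l
    using measurable_compose[OF f measurable_component_singleton[OF that]] .
  have mv: "(\<lambda>\<omega>. mat_vec n m A (f \<omega>)) \<in> measurable N (PiM {1..n} (\<lambda>_. borel))"
    unfolding mat_vec_def
  proof (rule measurable_restrict)
    fix i assume "i \<in> {1..n}"
    show "(\<lambda>\<omega>. \<Sum>j=1..m. A (i, j) * f \<omega> j) \<in> borel_measurable N"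
      using fm by (intro borel_measurable_sum borel_measurable_times measurable_const) auto
  qed
  have Asp: "A \<in> space (PiM ({1..n} \<times> {1..m}) (\<lambda>_. borel :: real measure))"
    using A by (simp add: space_PiM)
  have gm: "(\<lambda>\<omega>. g (A, mat_vec n m A (f \<omega>))) \<in> measurable N (PiM {1..m} (\<lambda>_. borel))"
    by (rule measurable_compose[OF _ g]) (rule measurable_Pair[OF measurable_const[OF Asp] mv])
  have gmc: "(\<lambda>\<omega>. g (A, mat_vec n m A (f \<omega>)) l) \<in> borel_measurable N" if "l \<in> {1..m}" for l
    using measurable_compose[OF gm measurable_component_singleton[OF that]] .
  have "{\<omega>\<in>space N. g (A, mat_vec n m A (f \<omega>)) \<noteq> f \<omega>} =
        (\<Union>l\<in>{1..m}. {\<omega>\<in>space N. g (A, mat_vec n m A (f \<omega>)) l \<noteq> f \<omega> l})"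
  proof safe
    fix \<omega> assume w: "\<omega> \<in> space N" and ne: "g (A, mat_vec n m A (f \<omega>)) \<noteq> f \<omega>"
    have "g (A, mat_vec n m A (f \<omega>)) \<in> extensional {1..m}" "f \<omega> \<in> extensional {1..m}"
      using measurable_space[OF gm w] measurable_space[OF f w] by (auto simp: space_PiM PiE_def)
    then show "\<omega> \<in> (\<Union>l\<in>{1..m}. {\<omega>\<in>space N. g (A, mat_vec n m A (f \<omega>)) l \<noteq> f \<omega> l})"
      using ne w extensionalityI by blast
  qed auto
  also have "\<dots> \<in> sets N"
    using gmc fm by (intro sets.finite_UN borel_measurable_neq) auto
  finally show ?thesis .
qed



theorem lemma8:
  fixes M :: "'a measure" and s m n :: nat
    and z :: "'a \<Rightarrow> nat \<Rightarrow> real" and k :: "'a \<Rightarrow> nat \<Rightarrow> nat"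
  assumes "prob_space M"
    and "z \<in> measurable M (PiM {1..s} (\<lambda>_. lborel))"
    and "absolutely_continuous (PiM {1..s} (\<lambda>_. lborel)) (distr M (PiM {1..s} (\<lambda>_. lborel)) z)"
    and "\<forall>j\<in>{1..s}. (\<lambda>\<omega>. k \<omega> j) \<in> measurable M (count_space UNIV)"
    and "\<forall>\<omega>\<in>space M. \<forall>j\<in>{1..s}. 1 \<le> k \<omega> j \<and> k \<omega> j \<le> m"
    and "\<forall>\<omega>\<in>space M. \<forall>j. 1 \<le> j \<and> j < s \<longrightarrow> k \<omega> j < k \<omega> (Suc j)"
    and "\<exists>A g. A \<in> ({1..n} \<times> {1..m}) \<rightarrow>\<^sub>E UNIV
            \<and> g \<in> measurable (PiM ({1..n} \<times> {1..m}) (\<lambda>_. borel) \<Otimes>\<^sub>M PiM {1..n} (\<lambda>_. borel))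
                             (PiM {1..m} (\<lambda>_. borel))
            \<and> measure M {\<omega> \<in> space M. g (A, mat_vec n m A (sparse_vec m s (k \<omega>) (z \<omega>)))
                                       \<noteq> sparse_vec m s (k \<omega>) (z \<omega>)} < 1"
  shows "s \<le> n"
proof (rule ccontr)
  assume "\<not> s \<le> n"
  then have ns: "n < s" by simp
  interpret prob_space M by fact
  define L where "L = PiM {1..s} (\<lambda>_. lborel::real measure)"
  obtain A g where A: "A \<in> ({1..n} \<times> {1..m}) \<rightarrow>\<^sub>E UNIV"
    and g: "g \<in> measurable (PiM ({1..n} \<times> {1..m}) (\<lambda>_. borel) \<Otimes>\<^sub>M PiM {1..n} (\<lambda>_. borel))
                             (PiM {1..m} (\<lambda>_. borel))"
    and pb: "measure M {\<omega> \<in> space M. g (A, mat_vec n m A (sparse_vec m s (k \<omega>) (z \<omega>)))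
                                       \<noteq> sparse_vec m s (k \<omega>) (z \<omega>)} < 1"
    using assms(7) by blast
  define bad where "bad = {\<omega> \<in> space M. g (A, mat_vec n m A (sparse_vec m s (k \<omega>) (z \<omega>)))
                                       \<noteq> sparse_vec m s (k \<omega>) (z \<omega>)}"
  have zj: "(\<lambda>\<omega>. z \<omega> j) \<in> borel_measurable M" if "j \<in> {1..s}" for j
    using measurable_compose[OF assms(2) measurable_component_singleton[OF that]] by simp
  have xvm: "(\<lambda>\<omega>. sparse_vec m s (k \<omega>) (z \<omega>)) \<in> measurable M (PiM {1..m} (\<lambda>_. borel))"
    by (rule sv_meas) (use assms(4) zj in auto)
  have bads: "bad \<in> sets M" unfolding bad_def by (rule bad_meas[OF g A xvm])
  define good where "good = space M - bad"
  have goods: "good \<in> sets M" using bads by (simp add: good_def)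
  have pgood: "measure M good > 0" using prob_compl[OF bads] pb unfolding good_def bad_def by simp
  define Ks where "Ks = Pi\<^sub>E {1..s} (\<lambda>_. {1..m::nat})"
  have finKs: "finite Ks" unfolding Ks_def by (intro finite_PiE) auto
  define GK where "GK K = {\<omega> \<in> good. \<forall>j\<in>{1..s}. k \<omega> j = K j}" for K
  have GKs: "GK K \<in> sets M" for K
  proof -
    have "{\<omega> \<in> space M. \<forall>j\<in>{1..s}. k \<omega> j = K j} \<in> sets M"
    proof (rule sets.sets_Collect_finite_All)
      fix j assume j: "j \<in> {1..s}"
      have "(\<lambda>\<omega>. k \<omega> j) -` {K j} \<inter> space M \<in> sets M"
        using assms(4) j by (intro measurable_sets) auto
      moreover have "(\<lambda>\<omega>. k \<omega> j) -` {K j} \<inter> space M = {\<omega>\<in>space M. k \<omega> j = K j}" by auto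
      ultimately show "{\<omega>\<in>space M. k \<omega> j = K j} \<in> sets M" by simp
    qed simp
    moreover have "GK K = good \<inter> {\<omega> \<in> space M. \<forall>j\<in>{1..s}. k \<omega> j = K j}"
      by (auto simp: GK_def good_def)
    ultimately show ?thesis using goods by simp
  qed
  have "good = (\<Union>K\<in>Ks. GK K)"
  proof safe
    fix \<omega> assume w: "\<omega> \<in> good"
    then have "\<omega> \<in> space M" by (simp add: good_def)
    then have "restrict (k \<omega>) {1..s} \<in> Ks" using assms(5) by (auto simp: Ks_def)
    moreover have "\<omega> \<in> GK (restrict (k \<omega>) {1..s})" using w by (simp add: GK_def)
    ultimately show "\<omega> \<in> (\<Union>K\<in>Ks. GK K)" by blast
  qed (auto simp: GK_def)
  then have "measure M good = measure M (\<Union>K\<in>Ks. GK K)" by simp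
  also have "\<dots> \<le> (\<Sum>K\<in>Ks. measure M (GK K))"
    by (rule finite_measure_subadditive_finite[OF finKs]) (use GKs in blast)
  finally have le: "measure M good \<le> (\<Sum>K\<in>Ks. measure M (GK K))" .
  have "\<exists>K\<in>Ks. measure M (GK K) > 0"
  proof (rule ccontr)
    assume "\<not> (\<exists>K\<in>Ks. measure M (GK K) > 0)"
    then have "\<forall>K\<in>Ks. measure M (GK K) \<le> 0" by (simp add: not_less)
    then have "(\<Sum>K\<in>Ks. measure M (GK K)) \<le> 0" by (intro sum_nonpos) blast
    then show False using le pgood by linarith
  qed
  then obtain K where K: "K \<in> Ks" and pK: "measure M (GK K) > 0" by blast
  have "GK K \<noteq> {}" using pK by auto
  then obtain \<omega>0 where w0: "\<omega>0 \<in> GK K" by blast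
  have w0s: "\<omega>0 \<in> space M" using w0 by (simp add: GK_def good_def)
  have rng: "\<forall>j\<in>{1..s}. K j \<in> {1..m}" using K by (auto simp: Ks_def)
  have inc: "\<forall>j. 1 \<le> j \<and> j < s \<longrightarrow> K j < K (Suc j)"
  proof (intro allI impI)
    fix j assume j: "1 \<le> j \<and> j < s"
    then have "k \<omega>0 j = K j" "k \<omega>0 (Suc j) = K (Suc j)" using w0 by (auto simp: GK_def)
    then show "K j < K (Suc j)" using assms(6) w0s j by metis
  qed
  have injK: "inj_on K {1..s}"
  proof (rule inj_onI)
    fix j j' assume j: "j \<in> {1..s}" "j' \<in> {1..s}" "K j = K j'"
    show "j = j'"
    proof (rule ccontr)
      assume "j \<noteq> j'"
      then consider "j < j'" | "j' < j" by linarith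
      then show False
        using incr_lt[OF inc, of j j'] incr_lt[OF inc, of j' j] j by cases auto
    qed
  qed
  define S where "S = {y \<in> space L. g (A, mat_vec n m A (sparse_vec m s K y)) = sparse_vec m s K y}"
  have Ss: "S \<in> sets L"
  proof -
    have "(\<lambda>y. sparse_vec m s K y) \<in> measurable L (PiM {1..m} (\<lambda>_. borel))"
      using sv_meas[of s "\<lambda>_. K" L "\<lambda>y. y" m]
      by (auto simp: L_def measurable_component_singleton)
    then have "{y \<in> space L. g (A, mat_vec n m A (sparse_vec m s K y)) \<noteq> sparse_vec m s K y} \<in> sets L"
      by (rule bad_meas[OF g A])
    moreover have "S = space L - {y \<in> space L. g (A, mat_vec n m A (sparse_vec m s K y)) \<noteq> sparse_vec m s K y}"
      by (auto simp: S_def)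
    ultimately show ?thesis by auto
  qed
  have sub: "GK K \<subseteq> z -` S \<inter> space M"
  proof
    fix \<omega> assume w: "\<omega> \<in> GK K"
    then have ws: "\<omega> \<in> space M" and kw: "\<forall>j\<in>{1..s}. k \<omega> j = K j" and ng: "\<omega> \<notin> bad"
      by (auto simp: GK_def good_def)
    have eqsv: "sparse_vec m s (k \<omega>) (z \<omega>) = sparse_vec m s K (z \<omega>)"
      unfolding sparse_vec_def by (intro restrict_cong refl sum.cong) (use kw in auto)
    have "z \<omega> \<in> space L" using measurable_space[OF assms(2) ws] by (simp add: L_def)
    then show "\<omega> \<in> z -` S \<inter> space M" using ng ws eqsv by (auto simp: S_def bad_def)
  qed
  have "emeasure M (GK K) \<noteq> 0" using pK GKs by (simp add: emeasure_eq_measure)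
  moreover have "emeasure M (GK K) \<le> emeasure (distr M L z) S"
    using sub Ss assms(2) GKs by (simp add: emeasure_distr L_def emeasure_mono)
  ultimately have dS: "emeasure (distr M L z) S \<noteq> 0" by auto
  have LS: "emeasure L S \<noteq> 0"
  proof
    assume "emeasure L S = 0"
    then have "S \<in> null_sets L" using Ss by auto
    then have "S \<in> null_sets (distr M L z)" using assms(3) unfolding absolutely_continuous_def L_def by blast
    then show False using dS by auto
  qed
  obtain v0 where v0: "\<exists>j\<in>{1..s}. v0 j \<noteq> 0" "\<forall>j. j \<notin> {1..s} \<longrightarrow> v0 j = 0"
    "\<forall>i<n. (\<Sum>j\<in>{1..s}. A (Suc i, K j) * v0 j) = 0"
    using kernel_exists[of "{1..s}" n "\<lambda>i j. A (Suc i, K j)"] ns by auto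
  have ker: "(\<Sum>j=1..s. A (i, K j) * v0 j) = 0" if "i \<in> {1..n}" for i
    using v0(3)[rule_format, of "i - 1"] that by (cases i) auto
  have "emeasure L S = 0"
    unfolding L_def
  proof (rule null_if_line_injective[of "{1..s}" S v0])
    show "S \<in> sets (PiM {1..s} (\<lambda>_. lborel))" using Ss by (simp add: L_def)
    show "\<exists>i\<in>{1..s}. v0 i \<noteq> 0" by fact
    show "finite {1..s::nat}" by simp
    fix x t assume x: "x \<in> S" and x': "(\<lambda>i\<in>{1..s}. x i + t * v0 i) \<in> S"
    define x' where "x' = (\<lambda>i\<in>{1..s}. x i + t * v0 i)"
    have "mat_vec n m A (sparse_vec m s K x') = mat_vec n m A (sparse_vec m s K x)"
    proof -
      have "(\<Sum>j=1..s. A (i, K j) * x' j) = (\<Sum>j=1..s. A (i, K j) * x j)" if "i \<in> {1..n}" for i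
      proof -
        have "(\<Sum>j=1..s. A (i, K j) * x' j) = (\<Sum>j=1..s. A (i, K j) * x j) + t * (\<Sum>j=1..s. A (i, K j) * v0 j)"
          by (simp add: x'_def sum.distrib sum_distrib_left algebra_simps)
        then show ?thesis using ker[OF that] by simp
      qed
      then show ?thesis unfolding mv_sv[OF rng] by (intro restrict_cong refl) auto
    qed
    then have "sparse_vec m s K x' = sparse_vec m s K x"
      using x x' by (simp add: S_def x'_def)
    moreover have "x \<in> extensional {1..s}" using x by (auto simp: S_def L_def space_PiM PiE_def)
    moreover have "x' \<in> extensional {1..s}" by (simp add: x'_def)
    ultimately have "x' = x" using sv_inj[OF injK rng] by blast
    moreover obtain i0 where "i0 \<in> {1..s}" "v0 i0 \<noteq> 0" using v0(1) by blast
    ultimately have "x' i0 = x i0" "i0 \<in> {1..s}" "v0 i0 \<noteq> 0" by auto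
    then have "t * v0 i0 = 0" by (simp add: x'_def)
    then show "t = 0" using \<open>v0 i0 \<noteq> 0\<close> by simp
  qed
  with LS show False by simp
qed

end
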